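(* Assume that $C(t)$, $A(t)$, $B(t)$ and $Q_o(t)$ exist and are bounded on $[t_0,t_f]$, and let $N_s=\ker\left(\mathrm{diag}\left(\begin{bmatrix}\bar c\\ \mathbf{0}_{n\times1}\end{bmatrix}\right)\right)$, where $\bar c\in\mathbb{R}^k$ has nonzero entries exactly at the positions of the known parameters of $c$. If there is an interval $[t_0,T]$ with $0<T\leq t_f$ on which $Q_p=N_s^TQ_o(t)Q_o(t)^TN_s$ is full rank almost everywhere, then $N_s^TP(0)N_s$ is positive definite and a unique solution to the (soft-constrained) IOC problem exists.
   Context: Primary optimal control problem: minimize $\int_{t_0}^{t_f} c^T\phi(t,x(t),u(t))\,dt$ subject to $\dot x=f(t,x,u)$, $x(0)=x_0$, $x\in\mathbb{R}^n$, $u\in\mathbb{R}^m$, known basis $\phi\in\mathbb{R}^k_+$, unknown weights $c\in\mathbb{R}^k$ (some entries known), $f$ continuously differentiable. Soft-constrained IOC: with $z=[c^T\ p^T]^T\in\mathbb{R}^{k+n}$, $p$ the costate, one minimizes $z_0^TP(0)z_0$ where $P(t)$ solves $\dot P=-A^TP-PA-C^TC+PBR^{-1}B^TP$, $P(t_f)=\mathbf{0}$, with $A(t)=-\begin{bmatrix}\mathbf{0}&\mathbf{0}\\ \nabla_x\phi^T&\nabla_xf^T\end{bmatrix}$, $B=\begin{bmatrix}\mathbf{0}_{k\times n}\\ I_n\end{bmatrix}$, $R=I$, $C(t)=\begin{bmatrix}\nabla_u\phi^T&\nabla_uf^T\end{bmatrix}$ (all evaluated along the observed trajectory). The time-varying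 observability matrix of order $l=k+n$ is $Q_o(t)=\begin{bmatrix}C^T & \Delta_oC^T & \cdots & \Delta_o^{l-1}C^T\end{bmatrix}$ with $\Delta_o=A^T(t)+\frac{d}{dt}$. It is sufficient for unique solvability that $N_s^TP(0)N_s$ be full rank. *)

theory Defs
  imports "HOL-Analysis.Analysis" "HOL-Library.Countable_Set"
begin

text \<open>State vector z = [c; p] indexed by the sum type 'k + 'n
  (first k entries: cost weights c, last n entries: costate p).\<close>

definition Amat :: "(real \<Rightarrow> real^'n^'k) \<Rightarrow> (real \<Rightarrow> real^'n^'n) \<Rightarrow> real \<Rightarrow> real^('k + 'n)^('k + 'n)"
  where "Amat Jxphi Jxf t = (\<chi> r s. case r of
            Inl _ \<Rightarrow> 0
          | Inr a \<Rightarrow> (case s of Inl b \<Rightarrow> - (Jxphi t $ b $ a) | Inr b \<Rightarrow> - (Jxf t $ b $ a)))"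

definition Cmat :: "(real \<Rightarrow> real^'m^'k) \<Rightarrow> (real \<Rightarrow> real^'m^'n) \<Rightarrow> real \<Rightarrow> real^('k + 'n)^'m"
  where "Cmat Juphi Juf t = (\<chi> i s. case s of Inl b \<Rightarrow> Juphi t $ b $ i | Inr b \<Rightarrow> Juf t $ b $ i)"

definition Bmat :: "real^'n::finite^('k::finite + 'n)"
  where "Bmat = (\<chi> r a. case r of Inl _ \<Rightarrow> 0 | Inr a' \<Rightarrow> (if a' = a then 1 else 0))"

text \<open>Blocks of the observability matrix: obs_blk j = Delta_o^j C^T with
  Delta_o M = A^T M + dM/dt (derivative taken within the time interval S).\<close>

fun obs_blk :: "(real \<Rightarrow> real^'l^'l) \<Rightarrow> (real \<Rightarrow> real^'l^'m) \<Rightarrow> real set \<Rightarrow> nat \<Rightarrow> real \<Rightarrow> real^'m^'l"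
  where
    "obs_blk A C S 0 = (\<lambda>t. transpose (C t))"
  | "obs_blk A C S (Suc j) = (\<lambda>t. transpose (A t) ** obs_blk A C S j t
                                   + vector_derivative (obs_blk A C S j) (at t within S))"

text \<open>Observability matrix of order l = CARD('l):
  Q_o = [C^T, Delta_o C^T, ..., Delta_o^(l-1) C^T]; column (j,i) is column i of block number j,
  where the block index j :: 'l is enumerated as 0..l-1 by a fixed bijection.\<close>

definition obs_mat :: "(real \<Rightarrow> real^'l::finite^'l) \<Rightarrow> (real \<Rightarrow> real^'l^'m::finite) \<Rightarrow> real set \<Rightarrow> real \<Rightarrow> real^('l \<times> 'm)^'l"
  where "obs_mat A C S t = (\<chi> r jc. obs_blk A C S (to_nat_on (UNIV :: 'l set) (fst jc)) t $ r $ snd jc)"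

definition diag_mat :: "real^'a \<Rightarrow> real^'a^'a"
  where "diag_mat v = (\<chi> i j. if i = j then v $ i else 0)"

text \<open>[cbar; 0_{n x 1}]\<close>
definition ext_zero :: "real^'k::finite \<Rightarrow> real^('k + 'n::finite)"
  where "ext_zero cb = (\<chi> r. case r of Inl i \<Rightarrow> cb $ i | Inr _ \<Rightarrow> 0)"

definition pos_def_mat :: "real^'a^'a \<Rightarrow> bool"
  where "pos_def_mat M \<longleftrightarrow> transpose M = M \<and> (\<forall>x. x \<noteq> 0 \<longrightarrow> 0 < x \<bullet> (M *v x))"

text \<open>Feasible points of the soft-constrained IOC problem: z0 = [c; p(0)] whose
  known weight entries (positions where cbar is nonzero) equal the known values cbar.\<close>
definition ioc_feasible :: "real^'k::finite \<Rightarrow> real^('k + 'n::finite) \<Rightarrow> bool"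
  where "ioc_feasible cb z \<longleftrightarrow> (\<forall>i. cb $ i \<noteq> 0 \<longrightarrow> z $ Inl i = cb $ i)"

end

theory Submission
  imports Defs
begin

lemma bounded_bilinear_mv: "bounded_bilinear (\<lambda>(A::real^'n^'m) (x::real^'n). A *v x)"
  unfolding bilinear_conv_bounded_bilinear[symmetric] bilinear_def
  by (auto intro!: linearI simp: matrix_vector_mult_add_rdistrib matrix_vector_right_distrib
      matrix_vector_mult_scaleR algebra_simps vec_eq_iff matrix_vector_mult_def sum_distrib_left sum.distrib)

lemma bounded_bilinear_mm: "bounded_bilinear (\<lambda>(A::real^'n^'m) (B::real^'p^'n). A ** B)"
  unfolding bilinear_conv_bounded_bilinear[symmetric] bilinear_def
  by (auto intro!: linearI simp: vec_eq_iff matrix_matrix_mult_def sum_distrib_left sum.distrib algebra_simps)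

lemma bounded_bilinear_vm: "bounded_bilinear (\<lambda>(x::real^'m) (A::real^'n^'m). x v* A)"
  unfolding bilinear_conv_bounded_bilinear[symmetric] bilinear_def
  by (auto intro!: linearI simp: vec_eq_iff vector_matrix_mult_def sum_distrib_left sum.distrib algebra_simps)

lemma bounded_linear_transpose: "bounded_linear (transpose :: real^'n^'m \<Rightarrow> real^'m^'n)"
  unfolding linear_conv_bounded_linear[symmetric]
  by (auto intro!: linearI simp: vec_eq_iff transpose_def)


lemma exp_integral_bound:
  fixes L s :: real
  assumes "0 < L" "0 \<le> s"
  shows "((\<lambda>u. exp (L * u)) has_integral ((exp (L * s) - 1) / L)) {0..s}"
proof -
  have "((\<lambda>u. exp (L * u)) has_integral (exp (L * s) / L - exp (L * 0) / L)) {0..s}"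
    by (rule fundamental_theorem_of_calculus[OF assms(2)])
       (use assms in \<open>auto intro!: derivative_eq_intros simp: has_real_derivative_iff_has_vector_derivative[symmetric]\<close>)
  then show ?thesis by (simp add: diff_divide_distrib)
qed

lemma linear_ode_exists:
  fixes M :: "real \<Rightarrow> real^'l^'l" and z0 :: "real^'l"
  assumes b: "0 \<le> b" and contM: "continuous_on {0..b} M"
  shows "\<exists>x. x 0 = z0 \<and> (\<forall>t\<in>{0..b}. (x has_vector_derivative M t *v x t) (at t within {0..b}))"
proof -
  obtain Kb where Kb: "\<And>(A::real^'l^'l) (v::real^'l). norm (A *v v) \<le> norm A * norm v * Kb"
    and Kb0: "0 < Kb"
    using bounded_bilinear.pos_bounded[OF bounded_bilinear_mv] by blast
  have "bounded (M ` {0..b})"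
    by (intro compact_imp_bounded compact_continuous_image contM) simp
  then obtain Km where Km: "\<And>t. t \<in> {0..b} \<Longrightarrow> norm (M t) \<le> Km"
    unfolding bounded_iff by blast
  define K where "K = max 1 (Km * Kb)"
  have K1: "1 \<le> K" by (simp add: K_def)
  define L where "L = 2 * K"
  have L0: "0 < L" using K1 by (simp add: L_def)
  have gbound: "norm (M u *v (exp (L * u) *\<^sub>R v)) \<le> K * exp (L * u) * norm v" if u: "u \<in> {0..b}" for u v
  proof -
    have "norm (M u *v (exp (L * u) *\<^sub>R v)) \<le> norm (M u) * norm (exp (L * u) *\<^sub>R v) * Kb" by (rule Kb)
    also have "\<dots> \<le> Km * norm (exp (L * u) *\<^sub>R v) * Kb"
      by (intro mult_right_mono Km u Kb0[THEN less_imp_le] norm_ge_zero)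
    also have "\<dots> = (Km * Kb) * exp (L * u) * norm v" by simp
    also have "\<dots> \<le> K * exp (L * u) * norm v"
      by (intro mult_right_mono) (auto simp: K_def)
    finally show ?thesis .
  qed
  define c where "c t = max 0 (min b t)" for t
  have c_in: "c t \<in> {0..b}" for t using b by (auto simp: c_def)
  have c_id: "t \<in> {0..b} \<Longrightarrow> c t = t" for t by (auto simp: c_def)
  have c_cont: "continuous_on UNIV c" unfolding c_def by (intro continuous_intros)
  define g where "g y s = M s *v (exp (L * s) *\<^sub>R apply_bcontfun y s)" for y :: "real \<Rightarrow>\<^sub>C (real^'l)" and s
  have g_cont: "continuous_on {0..b} (g y)" for y
    unfolding g_def
    by (intro bounded_bilinear.continuous_on[OF bounded_bilinear_mv] contM continuous_intros continuous_on_apply_bcontfun)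
  have g_int: "g y integrable_on {0..s}" if "s \<in> {0..b}" for y s
    using that by (intro integrable_continuous_interval continuous_on_subset[OF g_cont]) auto
  define F where "F y t = exp (- L * t) *\<^sub>R (z0 + integral {0..t} (g y))" for y t
  have F_cont: "continuous_on {0..b} (F y)" for y
  proof -
    have "continuous_on {0..b} (\<lambda>t. integral {0..t} (g y))"
      by (rule indefinite_integral_continuous_1[OF integrable_continuous_interval[OF g_cont]])
    then show ?thesis unfolding F_def by (intro continuous_intros)
  qed
  have Fc_bc: "(\<lambda>t. F y (c t)) \<in> bcontfun" for y
  proof -
    have "continuous_on UNIV (\<lambda>t. F y (c t))"
      by (rule continuous_on_compose2[OF F_cont c_cont]) (use c_in in auto)
    moreover have "bounded (range (\<lambda>t. F y (c t)))"
    proof -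
      have "bounded (F y ` {0..b})"
        by (intro compact_imp_bounded compact_continuous_image F_cont) simp
      moreover have "range (\<lambda>t. F y (c t)) \<subseteq> F y ` {0..b}" using c_in by auto
      ultimately show ?thesis by (rule bounded_subset)
    qed
    ultimately show ?thesis by (simp add: bcontfun_def)
  qed
  define T where "T y = Bcontfun (\<lambda>t. F y (c t))" for y
  have T_app: "apply_bcontfun (T y) t = F y (c t)" for y t
    unfolding T_def using Fc_bc by (simp add: Bcontfun_inverse)
  have contr: "dist (T y1) (T y2) \<le> (1/2) * dist y1 y2" for y1 y2
  proof (rule dist_bound)
    fix t
    define s where "s = c t"
    have s: "s \<in> {0..b}" using c_in by (simp add: s_def)
    define d where "d = dist y1 y2"
    have "F y1 s - F y2 s = exp (- L * s) *\<^sub>R (integral {0..s} (g y1) - integral {0..s} (g y2))"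
      by (simp add: F_def algebra_simps)
    also have "integral {0..s} (g y1) - integral {0..s} (g y2) = integral {0..s} (\<lambda>u. g y1 u - g y2 u)"
      using g_int[OF s] by (simp add: integral_diff)
    finally have eq: "F y1 s - F y2 s = exp (- L * s) *\<^sub>R integral {0..s} (\<lambda>u. g y1 u - g y2 u)" .
    have ib: "norm (integral {0..s} (\<lambda>u. g y1 u - g y2 u)) \<le> integral {0..s} (\<lambda>u. K * d * exp (L * u))"
    proof (rule integral_norm_bound_integral)
      show "(\<lambda>u. g y1 u - g y2 u) integrable_on {0..s}" using g_int[OF s] by (intro integrable_diff)
      show "(\<lambda>u. K * d * exp (L * u)) integrable_on {0..s}"
        by (intro integrable_continuous_interval continuous_intros)
      fix u assume u: "u \<in> {0..s}"
      then have ub: "u \<in> {0..b}" using s by auto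
      have "g y1 u - g y2 u = M u *v (exp (L * u) *\<^sub>R (apply_bcontfun y1 u - apply_bcontfun y2 u))"
        by (simp add: g_def algebra_simps matrix_vector_right_distrib scaleR_diff_right
            matrix_vector_mult_diff_distrib)
      also have "norm \<dots> \<le> K * exp (L * u) * norm (apply_bcontfun y1 u - apply_bcontfun y2 u)"
        by (rule gbound[OF ub])
      also have "\<dots> \<le> K * exp (L * u) * d"
        using dist_bounded[of y1 u y2] K1 by (intro mult_left_mono) (auto simp: d_def dist_norm)
      finally show "norm (g y1 u - g y2 u) \<le> K * d * exp (L * u)" by (simp add: algebra_simps)
    qed
    have "integral {0..s} (\<lambda>u. K * d * exp (L * u)) = K * d * ((exp (L * s) - 1) / L)"
      using exp_integral_bound[OF L0, of s] s
      by (simp add: integral_unique)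
    with ib have ib2: "norm (integral {0..s} (\<lambda>u. g y1 u - g y2 u)) \<le> K * d * ((exp (L * s) - 1) / L)"
      by simp
    have d0: "0 \<le> d" by (simp add: d_def)
    have "dist (apply_bcontfun (T y1) t) (apply_bcontfun (T y2) t) = norm (F y1 s - F y2 s)"
      by (simp add: T_app s_def dist_norm)
    also have "\<dots> = exp (- L * s) * norm (integral {0..s} (\<lambda>u. g y1 u - g y2 u))"
      by (simp add: eq)
    also have "\<dots> \<le> exp (- L * s) * (K * d * ((exp (L * s) - 1) / L))"
      by (intro mult_left_mono ib2) simp
    also have "\<dots> = (K * d / L) * (1 - exp (- L * s))"
      using L0 by (simp add: field_simps exp_minus exp_diff mult_exp_exp)
        (simp add: exp_minus field_simps)?
    also have "\<dots> \<le> (K * d / L) * 1"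
      using L0 K1 d0 by (intro mult_left_mono) auto
    also have "\<dots> = (1/2) * d" using K1 by (simp add: L_def field_simps)
    finally show "dist (apply_bcontfun (T y1) t) (apply_bcontfun (T y2) t) \<le> 1 / 2 * dist y1 y2"
      by (simp add: d_def)
  qed
  obtain y where y: "T y = y"
    using banach_fix_type[of "1/2" T] contr by auto
  define x where "x t = z0 + integral {0..t} (g y)" for t
  have xy: "x t = exp (L * t) *\<^sub>R apply_bcontfun y t" if "t \<in> {0..b}" for t
  proof -
    have "apply_bcontfun y t = F y t" using T_app[of y t] c_id[OF that] y by simp
    then show ?thesis by (simp add: F_def x_def mult_exp_exp)
  qed
  show ?thesis
  proof (intro exI conjI ballI)
    show "x 0 = z0" by (simp add: x_def)
    fix t assume t: "t \<in> {0..b}"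
    have "(x has_vector_derivative g y t) (at t within {0..b})"
      unfolding x_def
      using has_vector_derivative_add[OF has_vector_derivative_const integral_has_vector_derivative[OF g_cont t]]
      by simp
    moreover have "g y t = M t *v x t" by (simp add: g_def xy[OF t])
    ultimately show "(x has_vector_derivative M t *v x t) (at t within {0..b})" by simp
  qed
qed
lemma ode_zero_unique:
  fixes f :: "real \<Rightarrow> 'a::real_inner"
  assumes der: "\<And>t. t \<in> {a..b} \<Longrightarrow> (f has_vector_derivative f' t) (at t within {a..b})"
    and bnd: "\<And>t. t \<in> {a..b} \<Longrightarrow> norm (f' t) \<le> K * norm (f t)"
    and t0: "t0 \<in> {a..b}" "f t0 = 0"
    and t: "t \<in> {a..b}"
  shows "f t = 0"
proof -
  have K0: "0 \<le> K \<or> (\<forall>t\<in>{a..b}. f t = 0)"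
  proof (cases "0 \<le> K")
    case False
    { fix s assume s: "s \<in> {a..b}"
      have "0 \<le> norm (f' s)" by simp
      also have "\<dots> \<le> K * norm (f s)" using bnd s by blast
      finally have "f s = 0" using False
        by (metis mult_less_0_iff norm_eq_zero norm_ge_zero not_le order_antisym) }
    then show ?thesis by blast
  qed simp
  show ?thesis
  proof (cases "0 \<le> K")
    case False with K0 t show ?thesis by blast
  next
    case K: True
    have dinner: "((\<lambda>s. f s \<bullet> f s) has_real_derivative (f s \<bullet> f' s + f' s \<bullet> f s)) (at s within S)"
      if "s \<in> {a..b}" "S \<subseteq> {a..b}" for s S
      using bounded_bilinear.has_vector_derivative[OF bounded_bilinear_inner
          has_vector_derivative_within_subset[OF der[OF that(1)] that(2)]
          has_vector_derivative_within_subset[OF der[OF that(1)] that(2)]]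
      unfolding has_real_derivative_iff_has_vector_derivative by simp
    have cs: "f s \<bullet> f' s + f' s \<bullet> f s \<le> 2 * K * (f s \<bullet> f s)" 
      and cs2: "- (f s \<bullet> f' s + f' s \<bullet> f s) \<le> 2 * K * (f s \<bullet> f s)" if "s \<in> {a..b}" for s
    proof -
      have "\<bar>f s \<bullet> f' s\<bar> \<le> norm (f s) * norm (f' s)" by (rule Cauchy_Schwarz_ineq2)
      also have "\<dots> \<le> norm (f s) * (K * norm (f s))" using bnd[OF that] by (simp add: mult_left_mono)
      finally have "\<bar>f s \<bullet> f' s\<bar> \<le> K * (f s \<bullet> f s)"
        by (simp add: power2_norm_eq_inner[symmetric] power2_eq_square algebra_simps)
      then show "f s \<bullet> f' s + f' s \<bullet> f s \<le> 2 * K * (f s \<bullet> f s)"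
        "- (f s \<bullet> f' s + f' s \<bullet> f s) \<le> 2 * K * (f s \<bullet> f s)"
        by (auto simp: inner_commute)
    qed
    show ?thesis
    proof (cases "t0 \<le> t")
      case True
      define h where "h s = exp (- (2 * K) * s) * (f s \<bullet> f s)" for s
      define D where "D s = exp (- (2 * K) * s) * (f s \<bullet> f' s + f' s \<bullet> f s)
                    + (- (2 * K)) * exp (- (2 * K) * s) * (f s \<bullet> f s)" for s
      have "\<exists>x\<in>{t0..t}. h t - h t0 = (\<lambda>y. D x * y) (t - t0)"
      proof (rule mvt_very_simple[OF True])
        fix x assume x: "t0 \<le> x" "x \<le> t"
        then have xs: "x \<in> {a..b}" and sub: "{t0..t} \<subseteq> {a..b}" using t0 t by auto
        have "(h has_real_derivative D x) (at x within {t0..t})"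
          unfolding h_def D_def
          by (rule derivative_eq_intros refl dinner[OF xs sub] | simp)+
        then show "(h has_derivative (\<lambda>y. D x * y)) (at x within {t0..t})"
          by (simp add: has_field_derivative_def)
      qed
      then obtain x where x: "x \<in> {t0..t}" "h t - h t0 = D x * (t - t0)" by auto
      have xs: "x \<in> {a..b}" using x t0 t by auto
      have "D x = exp (- (2 * K) * x) * ((f x \<bullet> f' x + f' x \<bullet> f x) - 2 * K * (f x \<bullet> f x))"
        unfolding D_def by (simp add: algebra_simps)
      also have "\<dots> \<le> 0" using cs[OF xs] by (intro mult_nonneg_nonpos) auto
      finally have "D x \<le> 0" .
      moreover have "D x * (t - t0) \<le> 0" using \<open>D x \<le> 0\<close> True by (simp add: mult_nonpos_nonneg)
      ultimately have "h t \<le> h t0" using x by linarith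
      also have "h t0 = 0" using t0 by (simp add: h_def)
      finally have "f t \<bullet> f t \<le> 0" unfolding h_def by (simp add: mult_le_0_iff)
      then show ?thesis by (metis inner_ge_zero inner_eq_zero_iff order_antisym)
    next
      case False
      then have le: "t \<le> t0" by simp
      define h where "h s = exp ((2 * K) * s) * (f s \<bullet> f s)" for s
      define D where "D s = exp ((2 * K) * s) * (f s \<bullet> f' s + f' s \<bullet> f s)
                    + ((2 * K)) * exp ((2 * K) * s) * (f s \<bullet> f s)" for s
      have "\<exists>x\<in>{t..t0}. h t0 - h t = (\<lambda>y. D x * y) (t0 - t)"
      proof (rule mvt_very_simple[OF le])
        fix x assume x: "t \<le> x" "x \<le> t0"
        then have xs: "x \<in> {a..b}" and sub: "{t..t0} \<subseteq> {a..b}" using t0 t by auto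
        have "(h has_real_derivative D x) (at x within {t..t0})"
          unfolding h_def D_def
          by (rule derivative_eq_intros refl dinner[OF xs sub] | simp)+
        then show "(h has_derivative (\<lambda>y. D x * y)) (at x within {t..t0})"
          by (simp add: has_field_derivative_def)
      qed
      then obtain x where x: "x \<in> {t..t0}" "h t0 - h t = D x * (t0 - t)" by auto
      have xs: "x \<in> {a..b}" using x t0 t by auto
      have "D x = exp ((2 * K) * x) * ((f x \<bullet> f' x + f' x \<bullet> f x) + 2 * K * (f x \<bullet> f x))"
        unfolding D_def by (simp add: algebra_simps)
      also have "\<dots> \<ge> 0" using cs2[OF xs] by (intro mult_nonneg_nonneg) auto
      finally have "0 \<le> D x" .
      moreover have "D x * (t0 - t) \<ge> 0" using \<open>0 \<le> D x\<close> le by simp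
      ultimately have "h t \<le> h t0" using x by linarith
      also have "h t0 = 0" using t0 by (simp add: h_def)
      finally have "f t \<bullet> f t \<le> 0" unfolding h_def by (simp add: mult_le_0_iff)
      then show ?thesis by (metis inner_ge_zero inner_eq_zero_iff order_antisym)
    qed
  qed
qed
lemma transpose_add_m: "transpose (X + Y) = transpose X + transpose (Y::real^'n^'m)"
  by (simp add: vec_eq_iff transpose_def)
lemma transpose_diff_m: "transpose (X - Y) = transpose X - transpose (Y::real^'n^'m)"
  by (simp add: vec_eq_iff transpose_def)
lemma transpose_uminus_m: "transpose (- X) = - transpose (X::real^'n^'m)"
  by (simp add: vec_eq_iff transpose_def)
lemma transpose_zero_m: "transpose (0::real^'n^'m) = 0"
  by (simp add: vec_eq_iff transpose_def)
lemma inner_mv: "u \<bullet> (X *v w) = (transpose X *v u) \<bullet> (w::real^'n)" for X :: "real^'n^'m"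
  apply (simp add: inner_vec_def matrix_vector_mult_def transpose_def sum_distrib_left sum_distrib_right)
  apply (subst sum.swap)
  apply (simp add: algebra_simps)
  done
lemma diag_mv: "diag_mat v *v z = (\<chi> r. v $ r * z $ r)"
  by (simp add: vec_eq_iff diag_mat_def matrix_vector_mult_def if_distrib[of "\<lambda>a. a * _"] cong: if_cong)
lemma norm4: "norm (- a - b + c + d) \<le> norm a + norm b + norm c + norm (d::'a::real_normed_vector)"
  by (smt (verit) norm_minus_cancel norm_triangle_ineq norm_triangle_ineq4)
lemma mv_uminus_l: "(- X) *v v = - (X *v (v::real^'n))" for X :: "real^'n^'m"
  by (simp add: vec_eq_iff matrix_vector_mult_def sum_negf)
theorem theorem2:
  fixes Jxphi :: "real \<Rightarrow> real^'n^'k" and Jxf :: "real \<Rightarrow> real^'n^'n"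
    and Juphi :: "real \<Rightarrow> real^'m^'k" and Juf :: "real \<Rightarrow> real^'m^'n"
    and P :: "real \<Rightarrow> real^('k + 'n)^('k + 'n)"
    and cbar :: "real^'k" and Ns :: "real^'s^('k + 'n)"
    and tf T :: real
  defines "A \<equiv> Amat Jxphi Jxf" and "C \<equiv> Cmat Juphi Juf"
  assumes tf_pos: "0 < tf"
    and cont_A: "continuous_on {0..tf} A" and cont_C: "continuous_on {0..tf} C"
    and bnd_A: "bounded (A ` {0..tf})" and bnd_C: "bounded (C ` {0..tf})"
    and Qo_exists: "\<forall>j < CARD('k + 'n) - 1. \<forall>t \<in> {0..tf}.
                      obs_blk A C {0..tf} j differentiable (at t within {0..tf})"
    and bnd_Qo: "bounded (obs_mat A C {0..tf} ` {0..tf})"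
    and riccati: "\<forall>t \<in> {0..tf}. (P has_vector_derivative
                    (- (transpose (A t) ** P t) - P t ** A t - transpose (C t) ** C t
                     + P t ** Bmat ** transpose Bmat ** P t)) (at t within {0..tf})"
    and P_end: "P tf = 0"
    and Ns_inj: "\<forall>w. Ns *v w = 0 \<longrightarrow> w = 0"
    and Ns_ker: "range (\<lambda>w. Ns *v w) = {z. diag_mat (ext_zero cbar :: real^('k + 'n)) *v z = 0}"
    and T: "0 < T" "T \<le> tf"
    and Qp_full: "AE t in lborel. t \<in> {0..T} \<longrightarrow>
          rank (transpose Ns ** obs_mat A C {0..tf} t ** transpose (obs_mat A C {0..tf} t) ** Ns)
            = CARD('s)"
  shows "pos_def_mat (transpose Ns ** P 0 ** Ns)
       \<and> (\<exists>!z. ioc_feasible cbar z \<and>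
              (\<forall>z'. ioc_feasible cbar z' \<longrightarrow> z \<bullet> (P 0 *v z) \<le> z' \<bullet> (P 0 *v z')))"
proof -
  let ?I = "{0..tf::real}"
  have I0: "0 \<in> ?I" and Itf: "tf \<in> ?I" using tf_pos by auto
  define B2 :: "real^('k+'n)^('k+'n)" where "B2 = (Bmat :: real^'n^('k+'n)) ** transpose Bmat"
  define R where "R t = - (transpose (A t) ** P t) - P t ** A t - transpose (C t) ** C t
                     + P t ** Bmat ** transpose Bmat ** P t" for t
  have Pder: "\<And>t. t \<in> ?I \<Longrightarrow> (P has_vector_derivative R t) (at t within ?I)"
    using riccati by (simp add: R_def)
  have contP: "continuous_on ?I P"
    unfolding continuous_on_eq_continuous_within
    using Pder has_vector_derivative_continuous by blast
  obtain Kmm where Kmm: "\<And>(X::real^('k+'n)^('k+'n)) (Y::real^('k+'n)^('k+'n)). norm (X ** Y) \<le> norm X * norm Y * Kmm"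
    and Kmm0: "0 < Kmm"
    using bounded_bilinear.pos_bounded[OF bounded_bilinear_mm] by blast
  have contT: "continuous_on S (\<lambda>t. transpose (X t))" if "continuous_on S X" for S and X :: "real \<Rightarrow> real^('k+'n)^('k+'n)"
    by (rule bounded_linear.continuous_on[OF bounded_linear_transpose that])
  have contMM: "continuous_on S (\<lambda>t. X t ** Y t)" if "continuous_on S X" "continuous_on S Y"
    for S and X Y :: "real \<Rightarrow> real^('k+'n)^('k+'n)"
    by (rule bounded_bilinear.continuous_on[OF bounded_bilinear_mm that])
  have bndI: "\<exists>K. \<forall>t\<in>?I. norm (X t) \<le> K" if "continuous_on ?I X" for X :: "real \<Rightarrow> 'z::real_normed_vector"
  proof -
    have "bounded (X ` ?I)" by (intro compact_imp_bounded compact_continuous_image that) simp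
    then show ?thesis unfolding bounded_iff by blast
  qed
  have Psym: "transpose (P t) = P t" if t: "t \<in> ?I" for t
  proof -
    define D where "D t = P t - transpose (P t)" for t
    have Dder: "(D has_vector_derivative (R t - transpose (R t))) (at t within ?I)" if "t \<in> ?I" for t
      unfolding D_def
      by (intro has_vector_derivative_diff Pder[OF that]
          bounded_linear.has_vector_derivative[OF bounded_linear_transpose])
    have Deq: "R t - transpose (R t) = - (transpose (A t) ** D t) - D t ** A t + D t ** (B2 ** P t)
                 + (transpose (P t) ** B2) ** D t" for t
      unfolding matrix_eq
      by (simp add: R_def D_def B2_def matrix_transpose_mul transpose_add_m transpose_diff_m transpose_uminus_m
          matrix_vector_mul_assoc[symmetric] matrix_vector_mult_add_rdistrib matrix_vector_mult_diff_rdistrib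
          matrix_vector_mult_diff_distrib matrix_vector_right_distrib mv_uminus_l
          del: transpose_matrix_vector vector_transpose_matrix)
    have "continuous_on ?I (\<lambda>t. norm (transpose (A t)) + norm (A t) + norm (B2 ** P t) + norm (transpose (P t) ** B2))"
      by (intro continuous_intros contT contMM cont_A contP) 
    then obtain KW where KW: "\<And>t. t \<in> ?I \<Longrightarrow> norm (norm (transpose (A t)) + norm (A t) + norm (B2 ** P t) + norm (transpose (P t) ** B2)) \<le> KW"
      using bndI by blast
    have Dbnd: "norm (R t - transpose (R t)) \<le> (Kmm * KW) * norm (D t)" if "t \<in> ?I" for t
    proof -
      have "norm (R t - transpose (R t)) \<le> norm (transpose (A t)) * norm (D t) * Kmm + norm (D t) * norm (A t) * Kmm
            + norm (D t) * norm (B2 ** P t) * Kmm + norm (transpose (P t) ** B2) * norm (D t) * Kmm"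
        unfolding Deq by (rule order.trans[OF norm4]) (intro add_mono Kmm)
      also have "\<dots> = Kmm * (norm (transpose (A t)) + norm (A t) + norm (B2 ** P t) + norm (transpose (P t) ** B2)) * norm (D t)"
        by (simp add: algebra_simps)
      also have "\<dots> \<le> Kmm * KW * norm (D t)"
        using KW[OF that] Kmm0 by (intro mult_right_mono mult_left_mono) auto
      finally show ?thesis .
    qed
    have "D tf = 0" by (simp add: D_def P_end transpose_zero_m)
    then have "D t = 0" using ode_zero_unique[OF Dder Dbnd Itf _ t] by blast
    then show ?thesis by (simp add: D_def)
  qed
  define M where "M t = A t - B2 ** P t" for t
  have contM: "continuous_on ?I M"
    unfolding M_def by (intro continuous_intros contMM cont_A contP)
  obtain KA where KA: "\<And>t. t \<in> ?I \<Longrightarrow> norm (A t) \<le> KA"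
    using bndI[OF cont_A] by blast
  obtain Kmv where Kmv: "\<And>(X::real^('k+'n)^('k+'n)) (v::real^('k+'n)). norm (X *v v) \<le> norm X * norm v * Kmv"
    and Kmv0: "0 < Kmv"
    using bounded_bilinear.pos_bounded[OF bounded_bilinear_mv] by blast
  have Arow: "(A t *v v) $ Inl i = 0" for t v i
    by (simp add: A_def Amat_def matrix_vector_mult_def)
  have pos: "0 < z0 \<bullet> (P 0 *v z0)" if z0: "z0 \<in> range (\<lambda>w. Ns *v w)" "z0 \<noteq> 0" for z0
  proof (rule ccontr)
    assume nonpos: "\<not> 0 < z0 \<bullet> (P 0 *v z0)"
    obtain x where x0: "x 0 = z0"
      and xder: "\<And>t. t \<in> ?I \<Longrightarrow> (x has_vector_derivative M t *v x t) (at t within ?I)"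
      using linear_ode_exists[OF _ contM, of z0] tf_pos by force
    define V where "V t = x t \<bullet> (P t *v x t)" for t
    define W where "W t = (C t *v x t) \<bullet> (C t *v x t)
        + (transpose Bmat *v (P t *v x t)) \<bullet> (transpose Bmat *v (P t *v x t))" for t
    have mexp: "M t *v x t = A t *v x t - Bmat *v (transpose Bmat *v (P t *v x t))" for t
      by (simp add: M_def B2_def matrix_vector_mult_diff_rdistrib matrix_vector_mul_assoc[symmetric]
          del: transpose_matrix_vector vector_transpose_matrix)
    have rexp: "R t *v x t = - (transpose (A t) *v (P t *v x t)) - P t *v (A t *v x t)
        - transpose (C t) *v (C t *v x t) + P t *v (Bmat *v (transpose Bmat *v (P t *v x t)))" for t
      by (simp add: R_def matrix_vector_mult_diff_rdistrib matrix_vector_mult_add_rdistrib mv_uminus_l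
          matrix_vector_mul_assoc[symmetric]
          del: transpose_matrix_vector vector_transpose_matrix)
    have Vder: "(V has_vector_derivative (- W t)) (at t within ?I)" if t: "t \<in> ?I" for t
    proof -
      have "(V has_vector_derivative (x t \<bullet> (P t *v (M t *v x t) + R t *v x t) + (M t *v x t) \<bullet> (P t *v x t)))
          (at t within ?I)"
        unfolding V_def
        by (intro bounded_bilinear.has_vector_derivative[OF bounded_bilinear_inner]
            bounded_bilinear.has_vector_derivative[OF bounded_bilinear_mv] xder[OF t] Pder[OF t])
      moreover have "x t \<bullet> (P t *v (M t *v x t) + R t *v x t) + (M t *v x t) \<bullet> (P t *v x t) = - W t"
      proof -
        have i1: "x t \<bullet> (transpose (A t) *v (P t *v x t)) = (A t *v x t) \<bullet> (P t *v x t)"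
          by (simp add: inner_mv del: transpose_matrix_vector vector_transpose_matrix)
        have i2: "x t \<bullet> (transpose (C t) *v (C t *v x t)) = (C t *v x t) \<bullet> (C t *v x t)"
          by (simp add: inner_mv del: transpose_matrix_vector vector_transpose_matrix)
        have i3: "(Bmat *v (transpose Bmat *v (P t *v x t))) \<bullet> (P t *v x t)
            = (transpose Bmat *v (P t *v x t)) \<bullet> (transpose Bmat *v (P t *v x t))"
          by (subst inner_commute) (simp add: inner_mv del: transpose_matrix_vector vector_transpose_matrix)
        show ?thesis
          unfolding mexp rexp W_def
          by (simp add: matrix_vector_right_distrib matrix_vector_mult_diff_distrib inner_add_right
              inner_diff_right inner_minus_right inner_diff_left i1 i2 i3
              del: transpose_matrix_vector vector_transpose_matrix)
      qed
      ultimately show ?thesis by simp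
    qed
    have W0: "0 \<le> W t" for t by (simp add: W_def)
    have Vtf: "V tf = 0" by (simp add: V_def P_end)
    have V0: "V 0 \<le> 0" using nonpos x0 by (simp add: V_def)
    have Vmono: "V t2 \<le> V t1" if "0 \<le> t1" "t1 \<le> t2" "t2 \<le> tf" for t1 t2
    proof -
      have "\<exists>s\<in>{t1..t2}. V t2 - V t1 = (\<lambda>h. h *\<^sub>R (- W s)) (t2 - t1)"
      proof (rule mvt_very_simple[OF that(2)])
        fix s assume "t1 \<le> s" "s \<le> t2"
        then have s: "s \<in> ?I" and sub: "{t1..t2} \<subseteq> ?I" using that by auto
        show "(V has_derivative (\<lambda>h. h *\<^sub>R (- W s))) (at s within {t1..t2})"
          using has_vector_derivative_within_subset[OF Vder[OF s] sub]
          by (simp add: has_vector_derivative_def)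
      qed
      then obtain s where "V t2 - V t1 = (t2 - t1) * (- W s)" by auto
      moreover have "(t2 - t1) * (- W s) \<le> 0" using W0[of s] that by (simp add: mult_nonneg_nonpos)
      ultimately show ?thesis by linarith
    qed
    have Vz: "V t = 0" if "t \<in> ?I" for t
      using Vmono[of 0 t] Vmono[of t tf] that V0 Vtf by auto
    have Wz: "W t = 0" if t: "t \<in> ?I" for t
    proof -
      have "(V has_vector_derivative 0) (at t within ?I)"
        by (rule has_vector_derivative_transform[OF t _ has_vector_derivative_const[of 0]]) (simp add: Vz)
      then show ?thesis
        using vector_derivative_unique_within_closed_interval[of 0 tf t V "- W t" 0] tf_pos t Vder[OF t]
        by simp
    qed
    have Cx0: "C t *v x t = 0" and Bx0: "transpose Bmat *v (P t *v x t) = 0" if t: "t \<in> ?I" for t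
    proof -
      have "(C t *v x t) \<bullet> (C t *v x t) + (transpose Bmat *v (P t *v x t)) \<bullet> (transpose Bmat *v (P t *v x t)) = 0"
        using Wz[OF t] by (simp add: W_def)
      then have "(C t *v x t) \<bullet> (C t *v x t) = 0" "(transpose Bmat *v (P t *v x t)) \<bullet> (transpose Bmat *v (P t *v x t)) = 0"
        by (smt (verit) inner_ge_zero)+
      then show "C t *v x t = 0" "transpose Bmat *v (P t *v x t) = 0"
        by (simp_all only: inner_eq_zero_iff)
    qed
    have xA: "(x has_vector_derivative A t *v x t) (at t within ?I)" if t: "t \<in> ?I" for t
      using xder[OF t] mexp[of t] Bx0[OF t] by (simp del: transpose_matrix_vector vector_transpose_matrix)
    have xc: "x t $ Inl i = z0 $ Inl i" if t: "t \<in> ?I" for t i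
    proof -
      have dd: "((\<lambda>s. x s $ Inl i - z0 $ Inl i) has_vector_derivative 0) (at s within ?I)" if s: "s \<in> ?I" for s
          using has_vector_derivative_diff[OF bounded_linear.has_vector_derivative[OF bounded_linear_vec_nth xA[OF s], of "Inl i"]
              has_vector_derivative_const[of "z0 $ Inl i"]]
          by (simp add: Arow)
      have "x t $ Inl i - z0 $ Inl i = 0"
        using ode_zero_unique[where f'="\<lambda>_. 0" and K=0, OF dd _ I0 _ t] x0 by simp
      then show ?thesis by simp
    qed
    have xN: "x t \<in> range (\<lambda>w. Ns *v w)" if t: "t \<in> ?I" for t
    proof -
      have "diag_mat (ext_zero cbar :: real^('k + 'n)) *v x t = diag_mat (ext_zero cbar :: real^('k + 'n)) *v z0"
        unfolding diag_mv vec_eq_iff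
        by (auto simp: ext_zero_def xc[OF t] split: sum.split)
      then show ?thesis using z0(1) unfolding Ns_ker by simp
    qed
    have obs: "x t v* obs_blk A C ?I j t = 0" if "j < CARD('k+'n)" "t \<in> ?I" for j t
      using that
    proof (induction j arbitrary: t)
      case 0
      then show ?case using Cx0 by simp
    next
      case (Suc j)
      have j: "j < CARD('k+'n) - 1" using Suc.prems by simp
      have t: "t \<in> ?I" by fact
      have diff: "obs_blk A C ?I j differentiable (at t within ?I)" using Qo_exists j t by blast
      define O' where "O' = vector_derivative (obs_blk A C ?I j) (at t within ?I)"
      have d1: "((\<lambda>s. x s v* obs_blk A C ?I j s) has_vector_derivative (x t v* O' + (A t *v x t) v* obs_blk A C ?I j t))
          (at t within ?I)"
        unfolding O'_def
        by (rule bounded_bilinear.has_vector_derivative[OF bounded_bilinear_vm xA[OF t]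
              vector_derivative_works[THEN iffD1, OF diff]])
      have d2: "((\<lambda>s. x s v* obs_blk A C ?I j s) has_vector_derivative 0) (at t within ?I)"
        by (rule has_vector_derivative_transform[OF t _ has_vector_derivative_const[of 0]])
          (use Suc.IH j in auto)
      have "x t v* O' + (A t *v x t) v* obs_blk A C ?I j t = 0"
        using vector_derivative_unique_within_closed_interval[of 0 tf t _ _ 0] tf_pos t d1 d2 by simp
      moreover have "x t v* obs_blk A C ?I (Suc j) t = x t v* O' + (A t *v x t) v* obs_blk A C ?I j t"
        by (simp add: O'_def vector_matrix_mult_add_rdistrib vector_matrix_mul_assoc[symmetric])
      ultimately show ?case by simp
    qed
    have obsmat: "x t v* obs_mat A C ?I t = 0" if t: "t \<in> ?I" for t
    proof -
      have idx: "to_nat_on (UNIV :: ('k+'n) set) j < CARD('k+'n)" for j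
        using to_nat_on_finite[of "UNIV :: ('k+'n) set"] by (auto simp: bij_betw_def)
      show ?thesis
        unfolding vec_eq_iff
      proof
        fix jc :: "('k+'n) \<times> 'm"
        have "(x t v* obs_blk A C ?I (to_nat_on (UNIV :: ('k+'n) set) (fst jc)) t) $ snd jc = 0"
          using obs[OF idx t] by simp
        then show "(x t v* obs_mat A C ?I t) $ jc = 0 $ jc"
          by (simp add: vector_matrix_mult_def obs_mat_def)
      qed
    qed
    obtain t1 where t1: "t1 \<in> {0..T}"
      and rk: "rank (transpose Ns ** obs_mat A C ?I t1 ** transpose (obs_mat A C ?I t1) ** Ns) = CARD('s)"
    proof (rule ccontr)
      assume "\<not> thesis"
      with that have no: "\<And>t. t \<in> {0..T} \<Longrightarrow>
          rank (transpose Ns ** obs_mat A C ?I t ** transpose (obs_mat A C ?I t) ** Ns) \<noteq> CARD('s)"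
        by blast
      have "AE t in lborel. t \<notin> {0..T}"
        using Qp_full by (rule eventually_mono) (use no in blast)
      then have "emeasure lborel {0..T} = 0"
        by (subst (asm) AE_iff_measurable[of "{0..T}"]) auto
      then show False using T by simp
    qed
    have t1I: "t1 \<in> ?I" using t1 T by auto
    obtain w where w: "x t1 = Ns *v w" using xN[OF t1I] by auto
    define H where "H = transpose Ns ** obs_mat A C ?I t1 ** transpose (obs_mat A C ?I t1) ** Ns"
    have "H *v w = 0"
      using obsmat[OF t1I] w
      by (simp add: H_def matrix_vector_mul_assoc[symmetric])
    moreover have "inj ((*v) H)" using rk full_rank_injective unfolding H_def by blast
    ultimately have "w = 0" by (metis injD matrix_vector_mult_0_right)
    then have xt1: "x t1 = 0" using w by simp
    have "x 0 = 0"
    proof (rule ode_zero_unique[where f'="\<lambda>t. A t *v x t" and K="KA * Kmv", OF xA _ t1I xt1 I0])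
      fix t assume t: "t \<in> ?I"
      have "norm (A t *v x t) \<le> norm (A t) * norm (x t) * Kmv" by (rule Kmv)
      also have "\<dots> \<le> KA * norm (x t) * Kmv"
        using KA[OF t] Kmv0 by (intro mult_right_mono) auto
      finally show "norm (A t *v x t) \<le> KA * Kmv * norm (x t)" by (simp add: algebra_simps)
    qed
    then show False using x0 z0 by simp
  qed
  have P0sym: "transpose (P 0) = P 0" using Psym[OF I0] .
  define H0 where "H0 = transpose Ns ** P 0 ** Ns"
  have H0form: "w \<bullet> (H0 *v w) = (Ns *v w) \<bullet> (P 0 *v (Ns *v w))" for w
    by (simp add: H0_def matrix_vector_mul_assoc[symmetric] inner_mv
        del: transpose_matrix_vector vector_transpose_matrix)
  have H0pos: "0 < w \<bullet> (H0 *v w)" if "w \<noteq> 0" for w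
    unfolding H0form using pos[of "Ns *v w"] Ns_inj that by auto
  have PD: "pos_def_mat H0"
    unfolding pos_def_mat_def
  proof (intro conjI allI impI H0pos)
    show "transpose H0 = H0"
      by (simp add: H0_def matrix_transpose_mul P0sym matrix_mul_assoc)
  qed
  have rngN: "z \<in> range (\<lambda>w. Ns *v w) \<longleftrightarrow> (\<forall>i. cbar $ i \<noteq> 0 \<longrightarrow> z $ Inl i = 0)" for z
    unfolding Ns_ker diag_mv
    by (auto simp: vec_eq_iff ext_zero_def split: sum.split)
  define zp :: "real^('k+'n)" where "zp = ext_zero cbar"
  have zp: "ioc_feasible cbar zp" by (simp add: ioc_feasible_def zp_def ext_zero_def)
  have feas_diff: "z1 - z2 \<in> range (\<lambda>w. Ns *v w)" if "ioc_feasible cbar z1" "ioc_feasible cbar z2" for z1 z2 :: "real^('k+'n)"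
    using that unfolding rngN ioc_feasible_def by simp
  have feas_add: "ioc_feasible cbar (z + d)" if "ioc_feasible cbar z" "d \<in> range (\<lambda>w. Ns *v w)" for z d :: "real^('k+'n)"
    using that unfolding rngN ioc_feasible_def by simp
  have "inj ((*v) H0)"
  proof (rule injI)
    fix u v assume "H0 *v u = H0 *v v"
    then have "H0 *v (u - v) = 0" by (simp add: matrix_vector_mult_diff_distrib)
    then show "u = v" using H0pos[of "u - v"] by (auto simp del: transpose_matrix_vector vector_transpose_matrix)
  qed
  then have "surj ((*v) H0)"
    using full_rank_injective[of H0] full_rank_surjective[of H0] by simp
  then obtain ws where ws: "H0 *v ws = - (transpose Ns *v (P 0 *v zp))"
    by (metis surjD)
  define zs where "zs = zp + Ns *v ws"
  have zs: "ioc_feasible cbar zs" unfolding zs_def by (rule feas_add[OF zp]) auto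
  have orth: "d \<bullet> (P 0 *v zs) = 0" if dr: "d \<in> range (\<lambda>w. Ns *v w)" for d
  proof -
    obtain v where v: "d = Ns *v v" using dr by blast
    have "transpose Ns *v (P 0 *v zs) = transpose Ns *v (P 0 *v zp) + H0 *v ws"
      by (simp add: zs_def H0_def matrix_vector_right_distrib matrix_vector_mul_assoc[symmetric]
          del: transpose_matrix_vector vector_transpose_matrix)
    also have "\<dots> = 0" using ws by simp
    finally have "transpose Ns *v (P 0 *v zs) = 0" .
    then show ?thesis
      unfolding v using inner_mv[of v "transpose Ns" "P 0 *v zs"]
      by (simp del: transpose_matrix_vector vector_transpose_matrix)
  qed
  have expand: "(zs + d) \<bullet> (P 0 *v (zs + d)) = zs \<bullet> (P 0 *v zs) + d \<bullet> (P 0 *v d)"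
    if "d \<in> range (\<lambda>w. Ns *v w)" for d
  proof -
    have "zs \<bullet> (P 0 *v d) = d \<bullet> (P 0 *v zs)"
      using inner_mv[of zs "P 0" d] P0sym
      by (simp add: inner_commute del: transpose_matrix_vector vector_transpose_matrix)
    then show ?thesis using orth[OF that]
      by (simp add: matrix_vector_right_distrib inner_add_left inner_add_right
          del: transpose_matrix_vector vector_transpose_matrix)
  qed
  have dpos: "0 \<le> d \<bullet> (P 0 *v d)" if "d \<in> range (\<lambda>w. Ns *v w)" for d
    using pos[OF that] by (cases "d = 0") (auto simp del: transpose_matrix_vector vector_transpose_matrix)
  have uniq: "\<exists>!z. ioc_feasible cbar z \<and>
              (\<forall>z'. ioc_feasible cbar z' \<longrightarrow> z \<bullet> (P 0 *v z) \<le> z' \<bullet> (P 0 *v z'))"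
  proof (rule ex1I[of _ zs], intro conjI allI impI zs)
    fix z' :: "real^('k+'n)" assume z': "ioc_feasible cbar z'"
    have d: "z' - zs \<in> range (\<lambda>w. Ns *v w)" by (rule feas_diff[OF z' zs])
    have "z' \<bullet> (P 0 *v z') = zs \<bullet> (P 0 *v zs) + (z' - zs) \<bullet> (P 0 *v (z' - zs))"
      using expand[OF d] by simp
    then show "zs \<bullet> (P 0 *v zs) \<le> z' \<bullet> (P 0 *v z')" using dpos[OF d] by linarith
  next
    fix z :: "real^('k+'n)" assume z: "ioc_feasible cbar z \<and> (\<forall>z'. ioc_feasible cbar z' \<longrightarrow> z \<bullet> (P 0 *v z) \<le> z' \<bullet> (P 0 *v z'))"
    have d: "z - zs \<in> range (\<lambda>w. Ns *v w)" by (rule feas_diff) (use z zs in auto)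
    have "z \<bullet> (P 0 *v z) = zs \<bullet> (P 0 *v zs) + (z - zs) \<bullet> (P 0 *v (z - zs))"
      using expand[OF d] by simp
    moreover have "z \<bullet> (P 0 *v z) \<le> zs \<bullet> (P 0 *v zs)" using z zs by blast
    ultimately have "(z - zs) \<bullet> (P 0 *v (z - zs)) \<le> 0" by linarith
    then have "z - zs = 0" using pos[OF d] by (cases "z - zs = 0") auto
    then show "z = zs" by simp
  qed
  show ?thesis using PD uniq by (simp add: H0_def)
qed

end
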